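(* Let $X$ be a non-empty set, $\overline X=X\cup X'$ and $\widetilde X=\overline X\cup\{(x\wedge y):x,y\in\overline X\}$. The relation $\widetilde\Theta(\mathcal{CS},X)=\{(u,v)\in\widetilde X^+\times\widetilde X^+:\overline u=\overline v\}$ on the free semigroup $\widetilde X^+$ equals the semigroup congruence on $\widetilde X^+$ generated by $\mathrm I\cup\Upsilon_3\cup\Upsilon_4\cup\Upsilon_5$, where $\mathrm I=\{(xx'x,x):x\in\overline X\}$, $\Upsilon_3=\{((x\wedge y)(x\wedge z),(x\wedge z)):x,y,z\in\overline X\}$, $\Upsilon_4=\{((z\wedge x)(y\wedge x),(z\wedge x)):x,y,z\in\overline X\}$, $\Upsilon_5=\{(x'x,(x'\wedge x)):x\in\overline X\}$.
   Context: $X'=\{x':x\in X\}$ is a set disjoint from $X$ in bijection with $X$ via $x\mapsto x'$; extend $'$ to $\overline X$ by $(x')'=x$. The free binary semigroup $F_2(\overline X)$ is the smallest set of nonempty words over $\overline X\cup\{(,\wedge,)\}$ containing $\overline X$ and closed under concatenation and under $(u,v)\mapsto(u\wedge v)$. The symbols $(x\wedge y)$, $x,y\in\overline X$, are treated as single letters of the alphabet $\widetilde X$, and $\widetilde X^+\subseteq F_2(\overline X)$. For a term $w$, $\iota w$ [$w\tau$] is the first [last] element of $\overline X$ in $w$. Reductions ($u,v$ terms, $x,y,z\in\overline X$): (R0) $(u\wedge v)\rightsquigarrow(\iota u\wedge v\tau)$; (R1) $x(y\wedge x)\rightsquigarrow x$; (R2) $(x\wedge y)x\rightsquigarrow x$;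 (R3) $(x\wedge y)(x\wedge z)\rightsquigarrow(x\wedge z)$; (R4) $(z\wedge x)(y\wedge x)\rightsquigarrow(z\wedge x)$; (R5) $x'x\rightsquigarrow(x'\wedge x)$, applied to segments. It is known (Auinger) that every term has a unique reduced form $\overline w$ (no reduction applicable) obtainable by finitely many reductions; moreover $\widetilde\Theta(\mathcal{CS},X)$ is a congruence on $\widetilde X^+$ whose quotient is the bifree completely simple semigroup on $X$, and a pair $(u,v)$ lies in it iff the bi-identity $u\,\hat=\,v$ holds in all completely simple semigroups. *)

theory Defs
  imports Main
begin

text \<open>Letters of the doubled alphabet: a pair (x, b) with x in X; b = False encodes x,
  b = True encodes the primed copy x'. Priming flips the flag, so (x')' = x.\<close>

type_synonym 'a bar = "'a \<times> bool"

definition pr :: "'a bar \<Rightarrow> 'a bar" where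
  "pr a = (fst a, \<not> snd a)"

definition Xbar :: "'a set \<Rightarrow> 'a bar set" where
  "Xbar X = {a. fst a \<in> X}"

text \<open>Terms of the free binary semigroup: nonempty lists of atoms, an atom being a
  letter or a wedge (u \<and> v) of two terms.\<close>

datatype 'b atom = L 'b | W "'b atom list" "'b atom list"

fun iota :: "'b atom list \<Rightarrow> 'b" where
  "iota [] = undefined"
| "iota (L a # _) = a"
| "iota (W u v # _) = iota u"

fun tau :: "'b atom list \<Rightarrow> 'b" where
  "tau [] = undefined"
| "tau [L a] = a"
| "tau [W u v] = tau v"
| "tau (a # b # r) = tau (b # r)"

inductive red_local :: "'a bar atom list \<Rightarrow> 'a bar atom list \<Rightarrow> bool" where
  R0: "[W u v] \<noteq> [W [L (iota u)] [L (tau v)]] \<Longrightarrow>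
       red_local [W u v] [W [L (iota u)] [L (tau v)]]"
| R1: "red_local [L x, W [L y] [L x]] [L x]"
| R2: "red_local [W [L x] [L y], L x] [L x]"
| R3: "red_local [W [L x] [L y], W [L x] [L z]] [W [L x] [L z]]"
| R4: "red_local [W [L z] [L x], W [L y] [L x]] [W [L z] [L x]]"
| R5: "red_local [L (pr x), L x] [W [L (pr x)] [L x]]"

inductive red :: "'a bar atom list \<Rightarrow> 'a bar atom list \<Rightarrow> bool" where
  seg: "red_local s t \<Longrightarrow> red (p @ s @ q) (p @ t @ q)"
| inl: "red u u' \<Longrightarrow> red (p @ [W u v] @ q) (p @ [W u' v] @ q)"
| inr: "red v v' \<Longrightarrow> red (p @ [W u v] @ q) (p @ [W u v'] @ q)"

definition reduced :: "'a bar atom list \<Rightarrow> bool" where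
  "reduced w \<longleftrightarrow> (\<nexists>w'. red w w')"

definition rform :: "'a bar atom list \<Rightarrow> 'a bar atom list" where
  "rform w = (THE r. red\<^sup>*\<^sup>* w r \<and> reduced r)"

definition Xtilde :: "'a set \<Rightarrow> 'a bar atom set" where
  "Xtilde X = L ` Xbar X \<union> {W [L x] [L y] | x y. x \<in> Xbar X \<and> y \<in> Xbar X}"

definition Xplus :: "'a set \<Rightarrow> 'a bar atom list set" where
  "Xplus X = {w. w \<noteq> [] \<and> set w \<subseteq> Xtilde X}"

definition Theta :: "'a set \<Rightarrow> ('a bar atom list \<times> 'a bar atom list) set" where
  "Theta X = {(u, v). u \<in> Xplus X \<and> v \<in> Xplus X \<and> rform u = rform v}"

inductive_set cong_gen :: "'a set \<Rightarrow> ('a bar atom list \<times> 'a bar atom list) set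
    \<Rightarrow> ('a bar atom list \<times> 'a bar atom list) set"
  for X R where
  base: "(u, v) \<in> R \<Longrightarrow> (u, v) \<in> cong_gen X R"
| refl: "u \<in> Xplus X \<Longrightarrow> (u, u) \<in> cong_gen X R"
| sym: "(u, v) \<in> cong_gen X R \<Longrightarrow> (v, u) \<in> cong_gen X R"
| trans: "(u, v) \<in> cong_gen X R \<Longrightarrow> (v, w) \<in> cong_gen X R \<Longrightarrow> (u, w) \<in> cong_gen X R"
| mult: "(u, v) \<in> cong_gen X R \<Longrightarrow> set p \<subseteq> Xtilde X \<Longrightarrow> set q \<subseteq> Xtilde X \<Longrightarrow>
         (p @ u @ q, p @ v @ q) \<in> cong_gen X R"

definition GenI :: "'a set \<Rightarrow> ('a bar atom list \<times> 'a bar atom list) set" where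
  "GenI X = {([L x, L (pr x), L x], [L x]) | x. x \<in> Xbar X}"

definition Ups3 :: "'a set \<Rightarrow> ('a bar atom list \<times> 'a bar atom list) set" where
  "Ups3 X = {([W [L x] [L y], W [L x] [L z]], [W [L x] [L z]]) | x y z.
              x \<in> Xbar X \<and> y \<in> Xbar X \<and> z \<in> Xbar X}"

definition Ups4 :: "'a set \<Rightarrow> ('a bar atom list \<times> 'a bar atom list) set" where
  "Ups4 X = {([W [L z] [L x], W [L y] [L x]], [W [L z] [L x]]) | x y z.
              x \<in> Xbar X \<and> y \<in> Xbar X \<and> z \<in> Xbar X}"

definition Ups5 :: "'a set \<Rightarrow> ('a bar atom list \<times> 'a bar atom list) set" where
  "Ups5 X = {([L (pr x), L x], [W [L (pr x)] [L x]]) | x. x \<in> Xbar X}"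

end

theory Submission
  imports Defs
begin

lemma pr_pr[simp]: "pr (pr x) = x" by (simp add: pr_def)

lemma pr_Xbar[simp]: "pr x \<in> Xbar X \<longleftrightarrow> x \<in> Xbar X"
  by (simp add: pr_def Xbar_def)

lemma L_Xtilde[simp]: "L x \<in> Xtilde X \<longleftrightarrow> x \<in> Xbar X"
  by (auto simp: Xtilde_def)

lemma W_Xtilde[simp]: "W u v \<in> Xtilde X \<longleftrightarrow> (\<exists>x y. u = [L x] \<and> v = [L y] \<and> x \<in> Xbar X \<and> y \<in> Xbar X)"
  by (auto simp: Xtilde_def)

definition st :: "'a bar atom list \<Rightarrow> 'a bar atom list \<Rightarrow> bool" where
  "st w w' \<longleftrightarrow> (\<exists>p q a b c. w = p @ a # b # q \<and> w' = p @ c # q \<and> red_local [a, b] [c])"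

lemma R5': "red_local [L x, L (pr x)] [W [L x] [L (pr x)]]"
  using red_local.R5[of "pr x"] by simp

lemma local3:
  assumes "red_local [a, b] [d]" "red_local [b, c] [e]"
  shows "[d, c] = [a, e] \<or> (\<exists>z. red_local [d, c] [z] \<and> red_local [a, e] [z])"
  using assms
  apply (cases rule: red_local.cases)
  apply (auto elim!: red_local.cases intro: red_local.intros R5')
   apply (metis red_local.R5 red_local.R3)
  apply (metis red_local.R1 red_local.R2 pr_pr)
  done

lemma det: "red_local [a, b] [c] \<Longrightarrow> red_local [a, b] [c'] \<Longrightarrow> c = c'"
  by (auto elim!: red_local.cases)

lemma stI: "red_local [a, b] [c] \<Longrightarrow> st (p @ a # b # q) (p @ c # q)"
  unfolding st_def by blast

lemma st_len: "st w w' \<Longrightarrow> length w' < length w"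
  unfolding st_def by auto

lemma lc_aux:
  assumes eq: "p1 @ a # b # q1 = p2 @ a' # b' # q2" and le: "length p1 \<le> length p2"
    and r1: "red_local [a, b] [c]" and r2: "red_local [a', b'] [c']"
  shows "\<exists>z. st\<^sup>*\<^sup>* (p1 @ c # q1) z \<and> st\<^sup>*\<^sup>* (p2 @ c' # q2) z"
proof (cases "length p1 = length p2")
  case True
  with eq have "p1 = p2" "a = a'" "b = b'" "q1 = q2" using append_eq_append_conv[of p1 p2 "a # b # q1" "a' # b' # q2"] by simp_all
  with r1 r2 det have "c = c'" by blast
  with \<open>p1 = p2\<close> \<open>q1 = q2\<close> show ?thesis by auto
next
  case False
  with le have lt: "length p1 < length p2" by simp
  from eq obtain us where us: "p1 @ us = p2 \<and> a # b # q1 = us @ a' # b' # q2 \<or> p1 = p2 @ us \<and> us @ a # b # q1 = a' # b' # q2"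
    using append_eq_append_conv2[of p1 "a # b # q1" p2 "a' # b' # q2"] by blast
  then have "p2 = p1 @ us" "a # b # q1 = us @ a' # b' # q2" using lt by auto
  moreover have "us \<noteq> []" using lt calculation by auto
  ultimately obtain r where p2: "p2 = p1 @ a # r" and br: "b # q1 = r @ a' # b' # q2"
    by (cases us) auto
  show ?thesis
  proof (cases r)
    case Nil
    with br have "b = a'" "q1 = b' # q2" by auto
    with p2 Nil r1 r2 have w1: "p1 @ c # q1 = p1 @ c # b' # q2" and w2: "p2 @ c' # q2 = p1 @ a # c' # q2"
      and rr: "red_local [a, b] [c]" "red_local [b, b'] [c']" by auto
    from local3[OF rr] show ?thesis
    proof
      assume "[c, b'] = [a, c']" then show ?thesis using w1 w2 by auto
    next
      assume "\<exists>z. red_local [c, b'] [z] \<and> red_local [a, c'] [z]"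
      then obtain z where "red_local [c, b'] [z]" "red_local [a, c'] [z]" by blast
      then have "st (p1 @ c # b' # q2) (p1 @ z # q2)" "st (p1 @ a # c' # q2) (p1 @ z # q2)"
        by (auto intro: stI)
      then show ?thesis unfolding w1 w2 by (intro exI[of _ "p1 @ z # q2"] conjI r_into_rtranclp)
    qed
  next
    case (Cons b0 r')
    with br have "b0 = b" "q1 = r' @ a' # b' # q2" by auto
    then have "st (p1 @ c # q1) ((p1 @ c # r') @ c' # q2)"
      using stI[OF r2, of "p1 @ c # r'" q2] by simp
    moreover have "st (p2 @ c' # q2) (p1 @ c # (r' @ c' # q2))"
      using stI[OF r1, of p1 "r' @ c' # q2"] p2 Cons \<open>b0 = b\<close> by simp
    ultimately show ?thesis by (intro exI[of _ "p1 @ c # r' @ c' # q2"] conjI r_into_rtranclp) auto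
  qed
qed

lemma lc: assumes "st w w1" "st w w2" shows "\<exists>z. st\<^sup>*\<^sup>* w1 z \<and> st\<^sup>*\<^sup>* w2 z"
proof -
  from assms(1) obtain p q a b c where A: "w = p @ a # b # q" "w1 = p @ c # q" "red_local [a, b] [c]"
    unfolding st_def by blast
  from assms(2) obtain p2 q2 a2 b2 c2 where B: "w = p2 @ a2 # b2 # q2" "w2 = p2 @ c2 # q2" "red_local [a2, b2] [c2]"
    unfolding st_def by blast
  show ?thesis
  proof (cases "length p \<le> length p2")
    case True
    have eq: "p @ a # b # q = p2 @ a2 # b2 # q2" using A(1) B(1) by (rule HOL.trans[OF HOL.sym])
    show ?thesis using lc_aux[OF eq True A(3) B(3)] unfolding A(2) B(2) .
  next
    case False
    have eq: "p2 @ a2 # b2 # q2 = p @ a # b # q" using B(1) A(1) by (rule HOL.trans[OF HOL.sym])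
    from False have le: "length p2 \<le> length p" by simp
    have "\<exists>z. st\<^sup>*\<^sup>* w2 z \<and> st\<^sup>*\<^sup>* w1 z" using lc_aux[OF eq le B(3) A(3)] unfolding A(2) B(2) .
    then show ?thesis by blast
  qed
qed

definition irr :: "'a bar atom list \<Rightarrow> bool" where "irr w \<longleftrightarrow> (\<nexists>w'. st w w')"

lemma nf_ex: "\<exists>r. st\<^sup>*\<^sup>* w r \<and> irr r"
proof (induction w rule: measure_induct_rule[where f=length])
  case (less w)
  show ?case
  proof (cases "irr w")
    case True then show ?thesis by blast
  next
    case False
    then obtain w' where "st w w'" unfolding irr_def by blast
    moreover from less[of w'] st_len[OF this] obtain r where "st\<^sup>*\<^sup>* w' r" "irr r" by blast
    ultimately show ?thesis by (meson converse_rtranclp_into_rtranclp)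
  qed
qed

lemma nf_unique: "st\<^sup>*\<^sup>* w r1 \<Longrightarrow> irr r1 \<Longrightarrow> st\<^sup>*\<^sup>* w r2 \<Longrightarrow> irr r2 \<Longrightarrow> r1 = r2"
proof (induction w arbitrary: r1 r2 rule: measure_induct_rule[where f=length])
  case (less w)
  show ?case
  proof (cases "irr w")
    case True
    have "w = r1" using less.prems(1) True
      by (cases rule: converse_rtranclpE) (auto simp: irr_def)
    moreover have "w = r2" using less.prems(3) True
      by (cases rule: converse_rtranclpE) (auto simp: irr_def)
    ultimately show ?thesis by simp
  next
    case False
    from less.prems(1) False less.prems(2) obtain w1 where s1: "st w w1" "st\<^sup>*\<^sup>* w1 r1"
      by (cases rule: converse_rtranclpE) (auto simp: irr_def)
    from less.prems(3) False less.prems(4) obtain w2 where s2: "st w w2" "st\<^sup>*\<^sup>* w2 r2"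
      by (cases rule: converse_rtranclpE) (auto simp: irr_def)
    from lc[OF s1(1) s2(1)] obtain z where z: "st\<^sup>*\<^sup>* w1 z" "st\<^sup>*\<^sup>* w2 z" by blast
    obtain r3 where r3: "st\<^sup>*\<^sup>* z r3" "irr r3" using nf_ex by blast
    have "r1 = r3" using less.IH[OF st_len[OF s1(1)] s1(2) less.prems(2) rtranclp_trans[OF z(1) r3(1)] r3(2)] .
    moreover have "r2 = r3" using less.IH[OF st_len[OF s2(1)] s2(2) less.prems(4) rtranclp_trans[OF z(2) r3(1)] r3(2)] .
    ultimately show ?thesis by simp
  qed
qed

lemma st_red: "st w w' \<Longrightarrow> red w w'"
  unfolding st_def using red.seg by fastforce

lemma no_red_L: "\<not> red [L x] w'"
proof
  assume "red [L x] w'"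
  then show False
  proof cases
    case (seg s t p q)
    then show ?thesis
      by (cases p; cases s) (auto elim: red_local.cases)
  next
    case (inl u u' p v q)
    then show ?thesis by (cases p) auto
  next
    case (inr v v' p u q)
    then show ?thesis by (cases p) auto
  qed
qed

lemma red_st: assumes "red w w'" "set w \<subseteq> Xtilde X" shows "st w w'"
  using assms(1)
proof cases
  case (seg s t p q)
  from seg(3) show ?thesis
  proof cases
    case (R0 u v)
    with seg assms(2) show ?thesis by auto
  qed (use seg in \<open>auto intro: stI[simplified]\<close>)
next
  case (inl u u' p v q)
  with assms(2) obtain x where "u = [L x]" by auto
  with inl no_red_L show ?thesis by blast
next
  case (inr v v' p u q)
  with assms(2) obtain x where "v = [L x]" by auto
  with inr no_red_L show ?thesis by blast
qed

lemma local_Xt: "red_local [a, b] [c] \<Longrightarrow> a \<in> Xtilde X \<Longrightarrow> b \<in> Xtilde X \<Longrightarrow> c \<in> Xtilde X"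
  by (erule red_local.cases) auto

lemma st_Xplus: "st w w' \<Longrightarrow> w \<in> Xplus X \<Longrightarrow> w' \<in> Xplus X"
  unfolding st_def Xplus_def using local_Xt by fastforce

lemma sts_Xplus: "st\<^sup>*\<^sup>* w w' \<Longrightarrow> w \<in> Xplus X \<Longrightarrow> w' \<in> Xplus X"
  by (induction rule: rtranclp_induct) (auto intro: st_Xplus)

lemma reds_sts: "red\<^sup>*\<^sup>* w w' \<Longrightarrow> w \<in> Xplus X \<Longrightarrow> st\<^sup>*\<^sup>* w w'"
proof (induction rule: rtranclp_induct)
  case (step y z)
  then have "y \<in> Xplus X" using sts_Xplus by blast
  then have "st y z" using red_st[OF step(2)] unfolding Xplus_def by blast
  with step show ?case by simp
qed simp

lemma sts_reds: "st\<^sup>*\<^sup>* w w' \<Longrightarrow> red\<^sup>*\<^sup>* w w'"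
  by (induction rule: rtranclp_induct) (auto intro: st_red rtranclp.rtrancl_into_rtrancl)

lemma irr_reduced: "w \<in> Xplus X \<Longrightarrow> irr w \<Longrightarrow> reduced w"
  unfolding reduced_def irr_def Xplus_def using red_st by blast

lemma reduced_irr: "reduced w \<Longrightarrow> irr w"
  unfolding reduced_def irr_def using st_red by blast

lemma rform_eq: assumes "w \<in> Xplus X" "st\<^sup>*\<^sup>* w r" "irr r" shows "rform w = r"
  unfolding rform_def
proof (rule the_equality)
  show "red\<^sup>*\<^sup>* w r \<and> reduced r"
    using assms sts_reds irr_reduced sts_Xplus by blast
next
  fix r' assume "red\<^sup>*\<^sup>* w r' \<and> reduced r'"
  then have "st\<^sup>*\<^sup>* w r'" "irr r'" using reds_sts assms(1) reduced_irr by blast+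
  then show "r' = r" using nf_unique assms by blast
qed

lemma st_ctx: "st u v \<Longrightarrow> st (p @ u @ q) (p @ v @ q)"
  unfolding st_def by (metis append.assoc append_Cons)

lemma sts_ctx: "st\<^sup>*\<^sup>* u v \<Longrightarrow> st\<^sup>*\<^sup>* (p @ u @ q) (p @ v @ q)"
  by (induction rule: rtranclp_induct) (auto intro: st_ctx rtranclp.rtrancl_into_rtrancl)

lemma irr_single: "irr [a]"
  unfolding irr_def st_def by (auto simp: Cons_eq_append_conv)

lemma sts_Theta: "u \<in> Xplus X \<Longrightarrow> st\<^sup>*\<^sup>* u v \<Longrightarrow> (u, v) \<in> Theta X"
proof -
  assume u: "u \<in> Xplus X" and uv: "st\<^sup>*\<^sup>* u v"
  have v: "v \<in> Xplus X" using sts_Xplus uv u by blast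
  obtain r where r: "st\<^sup>*\<^sup>* v r" "irr r" using nf_ex by blast
  have "rform v = r" using rform_eq v r by blast
  moreover have "rform u = r" using rform_eq u rtranclp_trans[OF uv r(1)] r(2) by blast
  ultimately show ?thesis unfolding Theta_def using u v by simp
qed

lemma rform_ctx: assumes "u \<in> Xplus X" "set p \<subseteq> Xtilde X" "set q \<subseteq> Xtilde X"
  shows "rform (p @ u @ q) = rform (p @ rform u @ q)"
proof -
  obtain r where r: "st\<^sup>*\<^sup>* u r" "irr r" using nf_ex by blast
  have ru: "rform u = r" using rform_eq assms(1) r by blast
  have "r \<in> Xplus X" using sts_Xplus r assms(1) by blast
  then have pr: "p @ r @ q \<in> Xplus X" using assms unfolding Xplus_def by auto
  have pu: "p @ u @ q \<in> Xplus X" using assms unfolding Xplus_def by auto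
  obtain r2 where r2: "st\<^sup>*\<^sup>* (p @ r @ q) r2" "irr r2" using nf_ex by blast
  have "rform (p @ r @ q) = r2" using rform_eq pr r2 by blast
  moreover have "rform (p @ u @ q) = r2"
    using rform_eq pu rtranclp_trans[OF sts_ctx[OF r(1)] r2(1)] r2(2) by blast
  ultimately show ?thesis using ru by simp
qed

abbreviation G :: "'a set \<Rightarrow> ('a bar atom list \<times> 'a bar atom list) set" where
  "G X \<equiv> GenI X \<union> Ups3 X \<union> Ups4 X \<union> Ups5 X"

lemma gI: "x \<in> Xbar X \<Longrightarrow> ([L x, L (pr x), L x], [L x]) \<in> cong_gen X (G X)"
  by (rule cong_gen.base, rule UnI1, rule UnI1, rule UnI1) (unfold GenI_def, blast)
lemma g3: "x \<in> Xbar X \<Longrightarrow> y \<in> Xbar X \<Longrightarrow> z \<in> Xbar X \<Longrightarrow>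
  ([W [L x] [L y], W [L x] [L z]], [W [L x] [L z]]) \<in> cong_gen X (G X)"
  by (rule cong_gen.base, rule UnI1, rule UnI1, rule UnI2) (unfold Ups3_def, blast)
lemma g4: "x \<in> Xbar X \<Longrightarrow> y \<in> Xbar X \<Longrightarrow> z \<in> Xbar X \<Longrightarrow>
  ([W [L z] [L x], W [L y] [L x]], [W [L z] [L x]]) \<in> cong_gen X (G X)"
  by (rule cong_gen.base, rule UnI1, rule UnI2) (unfold Ups4_def, blast)
lemma g5: "x \<in> Xbar X \<Longrightarrow> ([L (pr x), L x], [W [L (pr x)] [L x]]) \<in> cong_gen X (G X)"
  by (rule cong_gen.base, rule UnI2) (unfold Ups5_def, blast)

lemmas cg_mult = cong_gen.mult
lemmas cg_sym = cong_gen.sym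
lemmas cg_trans = cong_gen.trans

lemma local_cg:
  assumes "red_local [a, b] [c]" "a \<in> Xtilde X" "b \<in> Xtilde X"
  shows "([a, b], [c]) \<in> cong_gen X (G X)"
  using assms(1)
proof cases
  case (R1 x y)
  with assms have x: "x \<in> Xbar X" and y: "y \<in> Xbar X" by auto
  have c1: "([L x, W [L y] [L x]], [L x, L (pr x), L x, W [L y] [L x]]) \<in> cong_gen X (G X)"
    using cg_sym[OF cg_mult[OF gI[OF x], of "[]" "[W [L y] [L x]]"]] x y by simp
  have c2: "([L x, L (pr x), L x, W [L y] [L x]], [L x, W [L (pr x)] [L x], W [L y] [L x]]) \<in> cong_gen X (G X)"
    using cg_mult[OF g5[OF x], of "[L x]" "[W [L y] [L x]]"] x y by simp
  have c3: "([L x, W [L (pr x)] [L x], W [L y] [L x]], [L x, W [L (pr x)] [L x]]) \<in> cong_gen X (G X)"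
    using cg_mult[OF g4[of x X y "pr x"], of "[L x]" "[]"] x y by simp
  have c4: "([L x, W [L (pr x)] [L x]], [L x, L (pr x), L x]) \<in> cong_gen X (G X)"
    using cg_sym[OF cg_mult[OF g5[OF x], of "[L x]" "[]"]] x by simp
  show ?thesis using R1 cg_trans[OF c1 cg_trans[OF c2 cg_trans[OF c3 cg_trans[OF c4 gI[OF x]]]]] by simp
next
  case (R2 x y)
  with assms have x: "x \<in> Xbar X" and y: "y \<in> Xbar X" by auto
  have px: "pr x \<in> Xbar X" using x by simp
  have c1: "([W [L x] [L y], L x], [W [L x] [L y], L x, L (pr x), L x]) \<in> cong_gen X (G X)"
    using cg_sym[OF cg_mult[OF gI[OF x], of "[W [L x] [L y]]" "[]"]] x y by simp
  have c2: "([W [L x] [L y], L x, L (pr x), L x], [W [L x] [L y], W [L x] [L (pr x)], L x]) \<in> cong_gen X (G X)"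
    using cg_mult[OF g5[OF px], of "[W [L x] [L y]]" "[L x]"] x y by simp
  have c3: "([W [L x] [L y], W [L x] [L (pr x)], L x], [W [L x] [L (pr x)], L x]) \<in> cong_gen X (G X)"
    using cg_mult[OF g3[of x X y "pr x"], of "[]" "[L x]"] x y by simp
  have c4: "([W [L x] [L (pr x)], L x], [L x, L (pr x), L x]) \<in> cong_gen X (G X)"
    using cg_sym[OF cg_mult[OF g5[OF px], of "[]" "[L x]"]] x by simp
  show ?thesis using R2 cg_trans[OF c1 cg_trans[OF c2 cg_trans[OF c3 cg_trans[OF c4 gI[OF x]]]]] by simp
next
  case (R3 x y z)
  with assms have "x \<in> Xbar X" "y \<in> Xbar X" "z \<in> Xbar X" by auto
  then show ?thesis using R3 g3[of x X y z] by simp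
next
  case (R4 z x y)
  with assms have "x \<in> Xbar X" "y \<in> Xbar X" "z \<in> Xbar X" by auto
  then show ?thesis using R4 g4[of x X y z] by simp
next
  case (R5 x)
  with assms have "x \<in> Xbar X" by auto
  then show ?thesis using R5 g5[of x X] by simp
qed

lemma st_cg: assumes "st u v" "u \<in> Xplus X" shows "(u, v) \<in> cong_gen X (G X)"
proof -
  from assms(1) obtain p q a b c where A: "u = p @ a # b # q" "v = p @ c # q" "red_local [a, b] [c]"
    unfolding st_def by blast
  with assms(2) have "set p \<subseteq> Xtilde X" "set q \<subseteq> Xtilde X" "a \<in> Xtilde X" "b \<in> Xtilde X"
    unfolding Xplus_def by auto
  with local_cg[OF A(3)] cg_mult show ?thesis unfolding A by fastforce
qed

lemma sts_cg: "st\<^sup>*\<^sup>* u v \<Longrightarrow> u \<in> Xplus X \<Longrightarrow> (u, v) \<in> cong_gen X (G X)"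
proof (induction rule: rtranclp_induct)
  case base
  then show ?case by (rule cong_gen.refl)
next
  case (step y z)
  then have "y \<in> Xplus X" using sts_Xplus by blast
  with step show ?case using st_cg cg_trans by blast
qed

lemma Xplus_I: "w \<noteq> [] \<Longrightarrow> set w \<subseteq> Xtilde X \<Longrightarrow> w \<in> Xplus X"
  unfolding Xplus_def by simp

lemma base_Theta: "(u, v) \<in> G X \<Longrightarrow> (u, v) \<in> Theta X"
proof (elim UnE)
  assume "(u, v) \<in> GenI X"
  then obtain x where x: "x \<in> Xbar X" "u = [L x, L (pr x), L x]" "v = [L x]"
    unfolding GenI_def by blast
  have "st [L x, L (pr x), L x] [L x, W [L (pr x)] [L x]]"
    using stI[OF red_local.R5[of x], of "[L x]" "[]"] by simp
  moreover have "st [L x, W [L (pr x)] [L x]] [L x]"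
    using stI[OF red_local.R1[of x "pr x"], of "[]" "[]"] by simp
  ultimately have "st\<^sup>*\<^sup>* u v" unfolding x by (meson rtranclp.rtrancl_refl rtranclp.rtrancl_into_rtrancl)
  moreover have "u \<in> Xplus X" using x unfolding Xplus_def by simp
  ultimately show ?thesis by (rule sts_Theta[rotated])
next
  assume "(u, v) \<in> Ups3 X"
  then obtain x y z where x: "x \<in> Xbar X" "y \<in> Xbar X" "z \<in> Xbar X"
    "u = [W [L x] [L y], W [L x] [L z]]" "v = [W [L x] [L z]]"
    unfolding Ups3_def by blast
  have "st u v" unfolding x using stI[OF red_local.R3[of x y z], of "[]" "[]"] by simp
  moreover have "u \<in> Xplus X" using x unfolding Xplus_def by simp
  ultimately show ?thesis by (meson sts_Theta r_into_rtranclp)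
next
  assume "(u, v) \<in> Ups4 X"
  then obtain x y z where x: "x \<in> Xbar X" "y \<in> Xbar X" "z \<in> Xbar X"
    "u = [W [L z] [L x], W [L y] [L x]]" "v = [W [L z] [L x]]"
    unfolding Ups4_def by blast
  have "st u v" unfolding x using stI[OF red_local.R4[of z x y], of "[]" "[]"] by simp
  moreover have "u \<in> Xplus X" using x unfolding Xplus_def by simp
  ultimately show ?thesis by (meson sts_Theta r_into_rtranclp)
next
  assume "(u, v) \<in> Ups5 X"
  then obtain x where x: "x \<in> Xbar X" "u = [L (pr x), L x]" "v = [W [L (pr x)] [L x]]"
    unfolding Ups5_def by blast
  have "st u v" unfolding x using stI[OF red_local.R5[of x], of "[]" "[]"] by simp
  moreover have "u \<in> Xplus X" using x unfolding Xplus_def by simp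
  ultimately show ?thesis by (meson sts_Theta r_into_rtranclp)
qed

theorem lemma2p7:
  fixes X :: "'a set"
  assumes "X \<noteq> {}"
  shows "Theta X = cong_gen X (GenI X \<union> Ups3 X \<union> Ups4 X \<union> Ups5 X)"
proof
  show "Theta X \<subseteq> cong_gen X (GenI X \<union> Ups3 X \<union> Ups4 X \<union> Ups5 X)"
  proof clarify
    fix u v assume "(u, v) \<in> Theta X"
    then have u: "u \<in> Xplus X" and v: "v \<in> Xplus X" and e: "rform u = rform v"
      unfolding Theta_def by auto
    obtain ru where ru: "st\<^sup>*\<^sup>* u ru" "irr ru" using nf_ex by blast
    obtain rv where rv: "st\<^sup>*\<^sup>* v rv" "irr rv" using nf_ex by blast
    have "ru = rv" using rform_eq[OF u ru] rform_eq[OF v rv] e by simp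
    then show "(u, v) \<in> cong_gen X (G X)"
      using sts_cg[OF ru(1) u] sts_cg[OF rv(1) v] cg_trans cg_sym by metis
  qed
next
  show "cong_gen X (GenI X \<union> Ups3 X \<union> Ups4 X \<union> Ups5 X) \<subseteq> Theta X"
  proof clarify
    fix u v assume "(u, v) \<in> cong_gen X (G X)"
    then show "(u, v) \<in> Theta X"
    proof (induction rule: cong_gen.induct)
      case (base u v)
      then show ?case by (rule base_Theta)
    next
      case (refl u)
      then show ?case by (meson sts_Theta rtranclp.rtrancl_refl)
    next
      case (sym u v)
      then show ?case unfolding Theta_def by simp
    next
      case (trans u v w)
      then show ?case unfolding Theta_def by simp
    next
      case (mult u v p q)
      then have u: "u \<in> Xplus X" and v: "v \<in> Xplus X" and e: "rform u = rform v"
        unfolding Theta_def by auto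
      have "p @ u @ q \<in> Xplus X" "p @ v @ q \<in> Xplus X"
        using u v mult.hyps unfolding Xplus_def by auto
      moreover have "rform (p @ u @ q) = rform (p @ v @ q)"
        using rform_ctx[OF u mult.hyps(2,3)] rform_ctx[OF v mult.hyps(2,3)] e by simp
      ultimately show ?case unfolding Theta_def by simp
    qed
  qed
qed

end
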